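(* Let $G$ be a connected finite simple graph with at least two vertices. Then its Cheeger constant satisfies $h(G)\geq \dfrac{1}{2(\tau(G)-1)}$.
   Context: $K=D-A$ is the Kirchhoff matrix of $G$ and $\tau(G)={\rm det}(1+K)/{\rm Det}(K)=\prod_{\lambda\neq0}(1+1/\lambda)$, the product over the non-zero eigenvalues of $K$ with multiplicity. The Cheeger constant is $h(G)=\min\{|E(S,V\setminus S)|/|S| : S\subset V,\ 0<|S|\leq |V|/2\}$, where $E(S,V\setminus S)$ is the set of edges with one endpoint in $S$ and one in $V\setminus S$. *)

theory Defs
  imports "Jordan_Normal_Form.Char_Poly"
begin

definition simple_graph :: "nat \<Rightarrow> (nat \<Rightarrow> nat \<Rightarrow> bool) \<Rightarrow> bool" where
  "simple_graph n E \<longleftrightarrow>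
     (\<forall>i j. E i j \<longrightarrow> i < n \<and> j < n) \<and> (\<forall>i j. E i j \<longrightarrow> E j i) \<and> (\<forall>i. \<not> E i i)"

definition connected_graph :: "nat \<Rightarrow> (nat \<Rightarrow> nat \<Rightarrow> bool) \<Rightarrow> bool" where
  "connected_graph n E \<longleftrightarrow> (\<forall>i<n. \<forall>j<n. E\<^sup>*\<^sup>* i j)"

definition degree :: "nat \<Rightarrow> (nat \<Rightarrow> nat \<Rightarrow> bool) \<Rightarrow> nat \<Rightarrow> nat" where
  "degree n E i = card {j. j < n \<and> E i j}"

definition adjacency_matrix :: "nat \<Rightarrow> (nat \<Rightarrow> nat \<Rightarrow> bool) \<Rightarrow> real mat" where
  "adjacency_matrix n E = mat n n (\<lambda>(i, j). if E i j then 1 else 0)"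

definition degree_matrix :: "nat \<Rightarrow> (nat \<Rightarrow> nat \<Rightarrow> bool) \<Rightarrow> real mat" where
  "degree_matrix n E = mat n n (\<lambda>(i, j). if i = j then real (degree n E i) else 0)"

definition kirchhoff :: "nat \<Rightarrow> (nat \<Rightarrow> nat \<Rightarrow> bool) \<Rightarrow> real mat" where
  "kirchhoff n E = degree_matrix n E - adjacency_matrix n E"

definition pdet :: "real mat \<Rightarrow> real" where
  "pdet K = (\<Prod>x\<in>{x. eigenvalue K x \<and> x \<noteq> 0}. x ^ order x (char_poly K))"

definition tau :: "nat \<Rightarrow> (nat \<Rightarrow> nat \<Rightarrow> bool) \<Rightarrow> real" where
  "tau n E = det (1\<^sub>m n + kirchhoff n E) / pdet (kirchhoff n E)"

text \<open>Edges between S and its complement in {0..<n}; each such edge corresponds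
  to exactly one ordered pair (i,j) with i in S and j not in S.\<close>
definition edge_boundary :: "nat \<Rightarrow> (nat \<Rightarrow> nat \<Rightarrow> bool) \<Rightarrow> nat set \<Rightarrow> (nat \<times> nat) set" where
  "edge_boundary n E S = {(i, j). i \<in> S \<and> j < n \<and> j \<notin> S \<and> E i j}"

definition cheeger :: "nat \<Rightarrow> (nat \<Rightarrow> nat \<Rightarrow> bool) \<Rightarrow> real" where
  "cheeger n E = Min ((\<lambda>S. real (card (edge_boundary n E S)) / real (card S)) `
      {S. S \<subseteq> {0..<n} \<and> 0 < card S \<and> real (card S) \<le> real n / 2})"

end

theory Submission
  imports Defs "Jordan_Normal_Form.Schur_Decomposition"
begin

lemma sym_real_eigen:
  fixes A :: "real mat"
  assumes A: "A \<in> carrier_mat n n"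
    and sym: "\<And>i j. i<n \<Longrightarrow> j<n \<Longrightarrow> A$$(i,j) = A$$(j,i)" and n: "n > 0"
  shows "\<exists>l v. v \<in> carrier_vec n \<and> v \<noteq> 0\<^sub>v n \<and> A *\<^sub>v v = l \<cdot>\<^sub>v v"
proof -
  let ?C = "map_mat complex_of_real A"
  have C: "?C \<in> carrier_mat n n" using A by auto
  obtain as where cp: "char_poly ?C = (\<Prod>a\<leftarrow>as. [:-a,1:])" "length as = n"
    using char_poly_factorized[OF C] by blast
  then obtain z rest where as: "as = z # rest" using n by (cases as) auto
  have "poly (char_poly ?C) z = 0" unfolding cp as by simp
  hence "eigenvalue ?C z" using eigenvalue_root_char_poly[OF C] by simp
  then obtain v where ev: "eigenvector ?C v z" unfolding eigenvalue_def by auto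
  hence v: "v \<in> carrier_vec n" "v \<noteq> 0\<^sub>v n" "?C *\<^sub>v v = z \<cdot>\<^sub>v v"
    unfolding eigenvector_def using A by auto
  have Cv: "(\<Sum>j<n. complex_of_real (A$$(i,j)) * v$j) = z * v$i" if i: "i<n" for i
  proof -
    have "(?C *\<^sub>v v) $ i = z * v$i" using v(3) i v(1) by simp
    moreover have "(?C *\<^sub>v v) $ i = (\<Sum>j<n. complex_of_real (A$$(i,j)) * v$j)"
      using i A v(1) by (auto simp: scalar_prod_def row_def intro!: sum.cong)
    ultimately show ?thesis by simp
  qed
  define L where "L = (\<Sum>i<n. cnj (v$i) * (\<Sum>j<n. complex_of_real (A$$(i,j)) * v$j))"
  define N where "N = (\<Sum>i<n. cnj (v$i) * v$i)"
  have "L = (\<Sum>i<n. cnj (v$i) * (z * v$i))" unfolding L_def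
    by (rule sum.cong) (auto simp: Cv)
  hence LN: "L = z * N" unfolding N_def by (simp add: sum_distrib_left mult_ac)
  have "cnj L = (\<Sum>i<n. v$i * (\<Sum>j<n. complex_of_real (A$$(i,j)) * cnj (v$j)))"
    unfolding L_def by simp
  also have "\<dots> = (\<Sum>i<n. \<Sum>j<n. v$i * complex_of_real (A$$(i,j)) * cnj (v$j))"
    by (simp add: sum_distrib_left mult_ac)
  also have "\<dots> = (\<Sum>j<n. \<Sum>i<n. v$i * complex_of_real (A$$(i,j)) * cnj (v$j))"
    by (rule sum.swap)
  also have "\<dots> = L" unfolding L_def
    by (auto simp: sum_distrib_left mult_ac sym intro!: sum.cong)
  finally have cL: "cnj L = L" .
  have Nr: "N = complex_of_real (\<Sum>i<n. (cmod (v$i))^2)"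
    unfolding N_def of_real_sum by (rule sum.cong) (auto simp: complex_norm_square[symmetric] mult.commute)
  have "\<exists>k<n. v$k \<noteq> 0"
  proof (rule ccontr)
    assume "\<not> ?thesis"
    hence "v = 0\<^sub>v n" using v(1) by (auto intro!: eq_vecI)
    thus False using v(2) by simp
  qed
  then obtain k where k: "k<n" "v$k \<noteq> 0" by blast
  have "(\<Sum>i<n. (cmod (v$i))^2) > 0"
  proof -
    have "(\<Sum>i<n. (cmod (v$i))^2) \<ge> (cmod (v$k))^2"
      using k by (intro member_le_sum) auto
    moreover have "(cmod (v$k))^2 > 0" using k by simp
    ultimately show ?thesis by linarith
  qed
  hence N0: "N \<noteq> 0" unfolding Nr by (metis less_irrefl of_real_eq_0_iff)
  have cN: "cnj N = N" unfolding Nr by (rule complex_cnj_complex_of_real)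
  have "cnj z = z"
  proof -
    have "cnj z * N = z * N" using cL LN cN by (metis complex_cnj_mult)
    thus ?thesis using N0 by simp
  qed
  hence "Im z = 0" by (simp add: complex_eq_iff)
  hence zr: "z = complex_of_real (Re z)" by (simp add: complex_eq_iff)
  define l where "l = Re z"
  have comp: "(\<Sum>j<n. A$$(i,j) * f (v$j)) = l * f (v$i)"
    if i: "i<n" and f: "f = Re \<or> f = Im" for i f
  proof -
    have e: "(\<Sum>j<n. complex_of_real (A$$(i,j)) * v$j) = complex_of_real l * v$i"
      using Cv[OF i] zr unfolding l_def by simp
    from f consider "f = Re" | "f = Im" by blast
    then show ?thesis
    proof cases
      case 1
      have "Re (\<Sum>j<n. complex_of_real (A$$(i,j)) * v$j) = Re (complex_of_real l * v$i)"
        using e by simp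
      thus ?thesis using 1 by (simp add: Re_sum)
    next
      case 2
      have "Im (\<Sum>j<n. complex_of_real (A$$(i,j)) * v$j) = Im (complex_of_real l * v$i)"
        using e by simp
      thus ?thesis using 2 by (simp add: Im_sum)
    qed
  qed
  show ?thesis
  proof (cases "\<exists>i<n. Re (v$i) \<noteq> 0")
    case True
    define w where "w = vec n (\<lambda>i. Re (v$i))"
    have "A *\<^sub>v w = l \<cdot>\<^sub>v w"
    proof (rule eq_vecI)
      fix i assume "i < dim_vec (l \<cdot>\<^sub>v w)"
      hence i: "i < n" by (simp add: w_def)
      have "(A *\<^sub>v w) $ i = row A i \<bullet> w" using A i by simp
      also have "\<dots> = (\<Sum>j<n. A$$(i,j) * Re (v$j))"
        using A i unfolding scalar_prod_def w_def by (auto simp: atLeast0LessThan intro!: sum.cong)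
      also have "\<dots> = l * Re (v$i)" by (rule comp[OF i]) simp
      finally show "(A *\<^sub>v w) $ i = (l \<cdot>\<^sub>v w) $ i" using i by (simp add: w_def)
    qed (use A in \<open>simp add: w_def\<close>)
    moreover have "w \<noteq> 0\<^sub>v n" using True by (auto simp: w_def vec_eq_iff)
    ultimately show ?thesis unfolding w_def by (intro exI[of _ l] exI[of _ "vec n _"]) auto
  next
    case False
    then obtain i where "i<n" "Im (v$i) \<noteq> 0" using k complex_eqI by fastforce
    define w where "w = vec n (\<lambda>i. Im (v$i))"
    have "A *\<^sub>v w = l \<cdot>\<^sub>v w"
    proof (rule eq_vecI)
      fix i assume "i < dim_vec (l \<cdot>\<^sub>v w)"
      hence i: "i < n" by (simp add: w_def)
      have "(A *\<^sub>v w) $ i = row A i \<bullet> w" using A i by simp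
      also have "\<dots> = (\<Sum>j<n. A$$(i,j) * Im (v$j))"
        using A i unfolding scalar_prod_def w_def by (auto simp: atLeast0LessThan intro!: sum.cong)
      also have "\<dots> = l * Im (v$i)" by (rule comp[OF i]) simp
      finally show "(A *\<^sub>v w) $ i = (l \<cdot>\<^sub>v w) $ i" using i by (simp add: w_def)
    qed (use A in \<open>simp add: w_def\<close>)
    moreover have "w \<noteq> 0\<^sub>v n" using \<open>i<n\<close> \<open>Im (v$i) \<noteq> 0\<close> by (auto simp: w_def vec_eq_iff)
    ultimately show ?thesis unfolding w_def by (intro exI[of _ l] exI[of _ "vec n _"]) auto
  qed
qed

lemma orth_completion:
  fixes u :: "real vec"
  assumes u: "u \<in> carrier_vec n" and u1: "u \<bullet> u = 1"
  shows "\<exists>W. W \<in> carrier_mat n n \<and> col W 0 = u \<and> transpose_mat W * W = 1\<^sub>m n \<and> W * transpose_mat W = 1\<^sub>m n"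
proof -
  interpret cof_vec_space n "TYPE(real)" .
  have u0: "u \<noteq> 0\<^sub>v n" using u1 u by auto
  define b where "b = basis_completion u"
  note bc = basis_completion[OF u u0, folded b_def]
  define ws where "ws = gram_schmidt n b"
  note gs = gram_schmidt_result[OF bc(2) bc(4) bc(5) ws_def]
  have n0: "n > 0" using u0 u by (cases n) auto
  from bc(6,7) n0 obtain vs where bv: "b = u # vs" by (cases b) auto
  have hdws: "hd ws = u" unfolding ws_def bv using gram_schmidt_hd[OF u] by simp
  have lws: "length ws = n" using gs(4) bc(6) by simp
  have wsc: "ws ! i \<in> carrier_vec n" if "i < n" for i using gs(3) lws that by auto
  have orth: "ws ! i \<bullet> ws ! j = 0 \<longleftrightarrow> i \<noteq> j" if "i<n" "j<n" for i j
    using gs(2) lws that unfolding corthogonal_def by simp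
  have pos: "ws ! i \<bullet> ws ! i > 0" if "i<n" for i
  proof -
    have "ws ! i \<bullet> ws ! i \<ge> 0" using conjugate_square_ge_0_vec[of "ws ! i"] by simp
    moreover have "ws ! i \<bullet> ws ! i \<noteq> 0" using orth[OF that that] by simp
    ultimately show ?thesis by simp
  qed
  define ws' where "ws' = map (\<lambda>w. (1 / sqrt (w \<bullet> w)) \<cdot>\<^sub>v w) ws"
  define W where "W = mat_of_cols n ws'"
  have lws': "length ws' = n" unfolding ws'_def using lws by simp
  have ws'i: "ws' ! i = (1 / sqrt (ws ! i \<bullet> ws ! i)) \<cdot>\<^sub>v ws ! i" if "i<n" for i
    unfolding ws'_def using lws that by simp
  have ws'c: "ws' ! i \<in> carrier_vec n" if "i<n" for i using ws'i[OF that] wsc[OF that] by simp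
  have colW: "col W i = ws' ! i" if "i<n" for i unfolding W_def using lws' ws'c that by simp
  have W: "W \<in> carrier_mat n n" unfolding W_def using lws' mat_of_cols_carrier(1)[of n ws'] by simp
  have WTW: "transpose_mat W * W = 1\<^sub>m n"
  proof (rule eq_matI)
    fix i j assume "i < dim_row (1\<^sub>m n)" "j < dim_col (1\<^sub>m n)"
    hence i: "i<n" and j: "j<n" by auto
    have "(transpose_mat W * W) $$ (i,j) = ws' ! i \<bullet> ws' ! j"
      using W i j colW by simp
    also have "\<dots> = (1 / sqrt (ws ! i \<bullet> ws ! i)) * (1 / sqrt (ws ! j \<bullet> ws ! j)) * (ws ! i \<bullet> ws ! j)"
      unfolding ws'i[OF i] ws'i[OF j] using wsc[OF i] wsc[OF j] by simp
    also have "\<dots> = 1\<^sub>m n $$ (i,j)"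
    proof (cases "i = j")
      case True
      have p: "sqrt (ws ! i \<bullet> ws ! i) > 0" using pos[OF i] by simp
      have "(sqrt (ws ! i \<bullet> ws ! i))^2 = ws ! i \<bullet> ws ! i" using pos[OF i] by simp
      thus ?thesis using True i p by (simp add: field_simps power2_eq_square)
    next
      case False
      thus ?thesis using orth[OF i j] i j by simp
    qed
    finally show "(transpose_mat W * W) $$ (i,j) = 1\<^sub>m n $$ (i,j)" .
  qed (use W in auto)
  have WWT: "W * transpose_mat W = 1\<^sub>m n"
    by (rule mat_mult_left_right_inverse[OF _ W WTW]) (use W in simp)
  have "col W 0 = u" using colW[OF n0] ws'i[OF n0] hdws lws n0 u1
    by (cases ws) auto
  thus ?thesis using W WTW WWT by blast
qed

lemma spectral:
  fixes A :: "real mat"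
  assumes "A \<in> carrier_mat n n" "transpose_mat A = A"
  shows "\<exists>U D. U \<in> carrier_mat n n \<and> D \<in> carrier_mat n n \<and> diagonal_mat D \<and>
    transpose_mat U * U = 1\<^sub>m n \<and> U * transpose_mat U = 1\<^sub>m n \<and> A = U * D * transpose_mat U"
  using assms
proof (induction n arbitrary: A)
  case 0
  then show ?case
    by (intro exI[of _ "1\<^sub>m 0"] exI[of _ A]) (auto simp: diagonal_mat_def intro!: eq_matI)
next
  case (Suc m)
  let ?n = "Suc m"
  have A: "A \<in> carrier_mat ?n ?n" and AT: "transpose_mat A = A" using Suc.prems by auto
  have sym: "A$$(i,j) = A$$(j,i)" if "i<?n" "j<?n" for i j
    using arg_cong[OF AT, of "\<lambda>M. M$$(i,j)"] A that by simp
  obtain l v where v: "v \<in> carrier_vec ?n" "v \<noteq> 0\<^sub>v ?n" "A *\<^sub>v v = l \<cdot>\<^sub>v v"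
    using sym_real_eigen[OF A sym] by blast
  have vp: "v \<bullet> v > 0" using conjugate_square_greater_0_vec[OF v(1)] v(2) by simp
  define u where "u = (1 / sqrt (v \<bullet> v)) \<cdot>\<^sub>v v"
  have u: "u \<in> carrier_vec ?n" unfolding u_def using v by simp
  have u1: "u \<bullet> u = 1"
  proof -
    have "u \<bullet> u = (1 / sqrt (v \<bullet> v)) * (1 / sqrt (v \<bullet> v)) * (v \<bullet> v)"
      unfolding u_def using v(1) by simp
    also have "\<dots> = 1" using vp
      by (simp add: field_simps)
    finally show ?thesis .
  qed
  have Au: "A *\<^sub>v u = l \<cdot>\<^sub>v u" unfolding u_def
    using v A by (simp add: mult_mat_vec smult_smult_assoc mult.commute)
  obtain W where W: "W \<in> carrier_mat ?n ?n" "col W 0 = u" "transpose_mat W * W = 1\<^sub>m ?n"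
    "W * transpose_mat W = 1\<^sub>m ?n"
    using orth_completion[OF u u1] by blast
  have WT: "transpose_mat W \<in> carrier_mat ?n ?n" using W by simp
  define A' where "A' = transpose_mat W * A * W"
  have A': "A' \<in> carrier_mat ?n ?n" unfolding A'_def using W A by simp
  have A'T: "transpose_mat A' = A'"
  proof -
    have "transpose_mat A' = transpose_mat W * transpose_mat (transpose_mat W * A)"
      unfolding A'_def by (rule transpose_mult[of _ ?n ?n]) (use W A in auto)
    also have "transpose_mat (transpose_mat W * A) = transpose_mat A * W"
      by (subst transpose_mult[of _ ?n ?n]) (use W A in auto)
    finally show ?thesis unfolding AT A'_def using W A by simp
  qed
  have WTu: "transpose_mat W *\<^sub>v u = unit_vec ?n 0"
  proof -
    have "transpose_mat W *\<^sub>v u = col (transpose_mat W * W) 0"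
      by (simp add: col_mult2[OF WT W(1)] W(2))
    also have "\<dots> = unit_vec ?n 0" unfolding W(3) by (rule eq_vecI) auto
    finally show ?thesis .
  qed
  have colA': "col A' 0 = l \<cdot>\<^sub>v unit_vec ?n 0"
  proof -
    have "col A' 0 = (transpose_mat W * A) *\<^sub>v col W 0"
      unfolding A'_def using W WT A by (subst col_mult2[of _ ?n ?n]) auto
    also have "\<dots> = transpose_mat W *\<^sub>v (A *\<^sub>v u)" using W WT A u by simp
    also have "\<dots> = l \<cdot>\<^sub>v (transpose_mat W *\<^sub>v u)" unfolding Au using WT u
      by (simp add: mult_mat_vec)
    finally show ?thesis unfolding WTu .
  qed
  have A'0: "A'$$(i,0) = (if i = 0 then l else 0)" if "i < ?n" for i
    using arg_cong[OF colA', of "\<lambda>x. x $ i"] A' that by simp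
  have A'0': "A'$$(0,j) = (if j = 0 then l else 0)" if "j < ?n" for j
    using arg_cong[OF A'T, of "\<lambda>M. M$$(j,0)"] A' that A'0[OF that] by simp
  define A3 where "A3 = mat m m (\<lambda>(i,j). A'$$(Suc i, Suc j))"
  define L where "L = mat 1 1 (\<lambda>_. l)"
  have A3: "A3 \<in> carrier_mat m m" unfolding A3_def by simp
  have L: "L \<in> carrier_mat 1 1" unfolding L_def by simp
  have A3T: "transpose_mat A3 = A3"
  proof (rule eq_matI)
    fix i j assume "i < dim_row A3" "j < dim_col A3"
    thus "transpose_mat A3 $$ (i,j) = A3 $$ (i,j)"
      using arg_cong[OF A'T, of "\<lambda>M. M$$(Suc i,Suc j)"] A' unfolding A3_def by simp
  qed (auto simp: A3_def)
  have A'blk: "A' = four_block_mat L (0\<^sub>m 1 m) (0\<^sub>m m 1) A3"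
  proof (rule eq_matI)
    fix i j assume ij: "i < dim_row (four_block_mat L (0\<^sub>m 1 m) (0\<^sub>m m 1) A3)"
      "j < dim_col (four_block_mat L (0\<^sub>m 1 m) (0\<^sub>m m 1) A3)"
    hence i: "i < ?n" and j: "j < ?n" using L A3 by auto
    show "A' $$ (i,j) = four_block_mat L (0\<^sub>m 1 m) (0\<^sub>m m 1) A3 $$ (i,j)"
    proof (cases "i = 0")
      case True
      thus ?thesis using A'0'[OF j] L A3 j by (cases j) (auto simp: L_def)
    next
      case False
      then obtain i' where i': "i = Suc i'" by (cases i) auto
      show ?thesis
      proof (cases "j = 0")
        case True
        thus ?thesis using A'0[OF i] L A3 i i' by (auto simp: L_def)
      next
        case False
        then obtain j' where j': "j = Suc j'" by (cases j) auto
        show ?thesis using i j L A3 i' j' by (auto simp: A3_def)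
      qed
    qed
  qed (use A' L A3 in auto)
  obtain U3 D3 where U3: "U3 \<in> carrier_mat m m" "D3 \<in> carrier_mat m m" "diagonal_mat D3"
    "transpose_mat U3 * U3 = 1\<^sub>m m" "U3 * transpose_mat U3 = 1\<^sub>m m" "A3 = U3 * D3 * transpose_mat U3"
    using Suc.IH[OF A3 A3T] by blast
  define B where "B = four_block_mat (1\<^sub>m 1) (0\<^sub>m 1 m) (0\<^sub>m m 1) U3"
  define D where "D = four_block_mat L (0\<^sub>m 1 m) (0\<^sub>m m 1) D3"
  have B: "B \<in> carrier_mat ?n ?n" unfolding B_def using U3 by (metis four_block_carrier_mat one_carrier_mat plus_1_eq_Suc)
  have D: "D \<in> carrier_mat ?n ?n" unfolding D_def using U3 L by (metis four_block_carrier_mat plus_1_eq_Suc)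
  have BT: "transpose_mat B = four_block_mat (1\<^sub>m 1) (0\<^sub>m 1 m) (0\<^sub>m m 1) (transpose_mat U3)"
    unfolding B_def using U3 by (subst transpose_four_block_mat) auto
  have BTc: "transpose_mat B \<in> carrier_mat ?n ?n" using B by simp
  have BTB: "transpose_mat B * B = 1\<^sub>m ?n"
    unfolding BT unfolding B_def using U3
    by (subst mult_four_block_mat[of _ 1 1 _ m _ m _ _ 1 _ m]) auto
  have BBT: "B * transpose_mat B = 1\<^sub>m ?n"
    unfolding BT unfolding B_def using U3
    by (subst mult_four_block_mat[of _ 1 1 _ m _ m _ _ 1 _ m]) auto
  have BDBT: "B * D * transpose_mat B = A'"
  proof -
    have BD: "B * D = four_block_mat L (0\<^sub>m 1 m) (0\<^sub>m m 1) (U3 * D3)"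
      unfolding B_def D_def using U3 L
      by (subst mult_four_block_mat[of _ 1 1 _ m _ m _ _ 1 _ m]) auto
    have "B * D * transpose_mat B = four_block_mat L (0\<^sub>m 1 m) (0\<^sub>m m 1) (U3 * D3 * transpose_mat U3)"
      unfolding BD BT using U3 L
      by (subst mult_four_block_mat[of _ 1 1 _ m _ m _ _ 1 _ m]) auto
    thus ?thesis unfolding A'blk U3(6) .
  qed
  define U where "U = W * B"
  have U: "U \<in> carrier_mat ?n ?n" unfolding U_def using W B by simp
  have UT: "transpose_mat U = transpose_mat B * transpose_mat W"
    unfolding U_def using W B by (simp add: transpose_mult)
  have canc: "P * (Q * X) = X" if "P \<in> carrier_mat ?n ?n" "Q \<in> carrier_mat ?n ?n"
    "X \<in> carrier_mat ?n ?n" "P * Q = 1\<^sub>m ?n" for P Q X :: "real mat"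
    using that by (simp add: assoc_mult_mat[symmetric, of P ?n ?n Q ?n X ?n] left_mult_one_mat[of X ?n ?n])
  have "transpose_mat U * U = transpose_mat B * (transpose_mat W * (W * B))"
    unfolding UT unfolding U_def using W WT B BTc by (simp add: assoc_mult_mat[of _ ?n ?n _ ?n _ ?n])
  also have "\<dots> = 1\<^sub>m ?n" using canc[OF WT W(1) B W(3)] BTB by simp
  finally have UTU: "transpose_mat U * U = 1\<^sub>m ?n" .
  have "U * transpose_mat U = W * (B * (transpose_mat B * transpose_mat W))"
    unfolding UT unfolding U_def using W WT B BTc by (simp add: assoc_mult_mat[of _ ?n ?n _ ?n _ ?n])
  also have "\<dots> = 1\<^sub>m ?n" using canc[OF B BTc WT BBT] W(4) by simp
  finally have UUT: "U * transpose_mat U = 1\<^sub>m ?n" .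
  have "U * D * transpose_mat U = W * (B * D * transpose_mat B) * transpose_mat W"
    unfolding UT unfolding U_def using W WT B BTc D by (simp add: assoc_mult_mat[of _ ?n ?n _ ?n _ ?n])
  also have "\<dots> = W * (transpose_mat W * (A * (W * transpose_mat W)))"
    unfolding BDBT A'_def using W WT A by (simp add: assoc_mult_mat[of _ ?n ?n _ ?n _ ?n])
  also have "\<dots> = A" using W(4) A canc[OF W(1) WT A W(4)] by simp
  finally have UDU: "A = U * D * transpose_mat U" by simp
  have Ddiag: "diagonal_mat D"
    unfolding diagonal_mat_def
  proof (intro allI impI)
    fix i j assume i: "i < dim_row D" and j: "j < dim_col D" and ij: "i \<noteq> j"
    show "D $$ (i,j) = 0" using i j ij U3(2,3) L unfolding D_def diagonal_mat_def
      by (auto simp: L_def)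
  qed
  show ?case using U D Ddiag UTU UUT UDU by blast
qed

lemma kirchhoff_carrier: "kirchhoff n E \<in> carrier_mat n n"
  unfolding kirchhoff_def degree_matrix_def adjacency_matrix_def by auto

lemma kirchhoff_index:
  "i < n \<Longrightarrow> j < n \<Longrightarrow> kirchhoff n E $$ (i,j) =
     (if i = j then real (degree n E i) else 0) - (if E i j then 1 else 0)"
  unfolding kirchhoff_def degree_matrix_def adjacency_matrix_def by auto

lemma degree_sum: "real (degree n E i) = (\<Sum>j<n. if E i j then 1 else 0)"
proof -
  have "{j. j < n \<and> E i j} = {..<n} \<inter> Collect (E i)" by auto
  hence "degree n E i = card ({..<n} \<inter> Collect (E i))" unfolding degree_def by simp
  moreover have "(\<Sum>j<n. if E i j then 1 else 0::real) = real (card ({..<n} \<inter> Collect (E i)))"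
    by (simp add: sum.If_cases)
  ultimately show ?thesis by simp
qed

lemma kirchhoff_transpose:
  assumes "simple_graph n E"
  shows "transpose_mat (kirchhoff n E) = kirchhoff n E"
proof (rule eq_matI)
  fix i j assume "i < dim_row (kirchhoff n E)" "j < dim_col (kirchhoff n E)"
  hence ij: "i < n" "j < n" using kirchhoff_carrier[of n E] by auto
  have "E i j = E j i" using assms unfolding simple_graph_def by blast
  thus "transpose_mat (kirchhoff n E) $$ (i, j) = kirchhoff n E $$ (i, j)"
    using ij kirchhoff_carrier[of n E] by (auto simp: kirchhoff_index)
qed (use kirchhoff_carrier[of n E] in auto)

lemma kirchhoff_mult_vec:
  assumes G: "simple_graph n E" and x: "x \<in> carrier_vec n" and i: "i < n"
  shows "(kirchhoff n E *\<^sub>v x) $ i = (\<Sum>j<n. if E i j then x$i - x$j else 0)"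
proof -
  have noloop: "\<not> E i i" using G unfolding simple_graph_def by blast
  have "(kirchhoff n E *\<^sub>v x) $ i = (\<Sum>j<n. kirchhoff n E $$ (i,j) * x$j)"
    using i x kirchhoff_carrier[of n E] by (auto simp: scalar_prod_def atLeast0LessThan)
  also have "\<dots> = (\<Sum>j<n. (if i = j then real (degree n E i) * x$j else 0) - (if E i j then x$j else 0))"
    using i by (intro sum.cong) (auto simp: kirchhoff_index algebra_simps)
  also have "\<dots> = real (degree n E i) * x$i - (\<Sum>j<n. if E i j then x$j else 0)"
    using i by (simp add: sum_subtractf)
  also have "\<dots> = (\<Sum>j<n. if E i j then x$i - x$j else 0)"
    unfolding degree_sum by (simp add: sum_distrib_right sum_subtractf[symmetric] if_distrib
      cong: if_cong)
  finally show ?thesis .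
qed

lemma kirchhoff_quad:
  assumes G: "simple_graph n E" and x: "x \<in> carrier_vec n"
  shows "2 * (x \<bullet> (kirchhoff n E *\<^sub>v x)) = (\<Sum>i<n. \<Sum>j<n. if E i j then (x$i - x$j)^2 else 0)"
proof -
  have sym: "E i j = E j i" for i j using G unfolding simple_graph_def by blast
  define S where "S = (\<Sum>i<n. \<Sum>j<n. if E i j then x$i * (x$i - x$j) else 0)"
  have "x \<bullet> (kirchhoff n E *\<^sub>v x) = (\<Sum>i<n. x$i * (kirchhoff n E *\<^sub>v x)$i)"
    unfolding scalar_prod_def using x kirchhoff_carrier[of n E] by (simp add: atLeast0LessThan)
  also have "\<dots> = S" unfolding S_def
    by (intro sum.cong refl) (simp add: kirchhoff_mult_vec[OF G x] sum_distrib_left if_distrib cong: if_cong)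
  finally have xKx: "x \<bullet> (kirchhoff n E *\<^sub>v x) = S" .
  have "S = (\<Sum>j<n. \<Sum>i<n. if E i j then x$i * (x$i - x$j) else 0)"
    unfolding S_def by (rule sum.swap)
  also have "\<dots> = (\<Sum>i<n. \<Sum>j<n. if E i j then x$j * (x$j - x$i) else 0)"
    by (intro sum.cong refl) (auto simp: sym)
  finally have S2: "S = (\<Sum>i<n. \<Sum>j<n. if E i j then x$j * (x$j - x$i) else 0)" .
  have "2 * S = (\<Sum>i<n. \<Sum>j<n. if E i j then x$i * (x$i - x$j) else 0) +
      (\<Sum>i<n. \<Sum>j<n. if E i j then x$j * (x$j - x$i) else 0)"
    using S2 unfolding S_def by simp
  also have "\<dots> = (\<Sum>i<n. \<Sum>j<n. if E i j then (x$i - x$j)^2 else 0)"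
    unfolding sum.distrib[symmetric]
    by (intro sum.cong refl) (auto simp: power2_eq_square algebra_simps)
  finally show ?thesis unfolding xKx .
qed

lemma kernel_const:
  assumes G: "simple_graph n E" and C: "connected_graph n E"
    and x: "x \<in> carrier_vec n" and q: "x \<bullet> (kirchhoff n E *\<^sub>v x) = 0"
    and i: "i < n"
  shows "x $ i = x $ 0"
proof -
  have tot: "(\<Sum>i<n. \<Sum>j<n. if E i j then (x$i - x$j)^2 else 0) = 0"
    using kirchhoff_quad[OF G x] q by simp
  have edge: "x$a = x$b" if "E a b" for a b
  proof -
    have ab: "a < n" "b < n" using G that unfolding simple_graph_def by auto
    have "(\<Sum>j<n. if E a j then (x$a - x$j)^2 else 0) = 0"
      using tot ab by (subst (asm) sum_nonneg_eq_0_iff) (auto intro!: sum_nonneg)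
    hence "(if E a b then (x$a - x$b)^2 else 0) = 0"
      using ab by (subst (asm) sum_nonneg_eq_0_iff) auto
    thus ?thesis using that by simp
  qed
  have "E\<^sup>*\<^sup>* 0 i" using C i unfolding connected_graph_def by auto
  thus ?thesis
  proof (induction rule: rtranclp_induct)
    case base thus ?case by simp
  next
    case (step k j) thus ?case using edge[of k j] by simp
  qed
qed

lemma order_prod_linear:
  "Polynomial.order x (\<Prod>a\<leftarrow>es. [:- a, 1:]) = count (mset es) (x::real)"
proof (induction es)
  case Nil
  then show ?case by (simp add: order_0I)
next
  case (Cons a es)
  have lin: "[:- b, 1:] \<noteq> (0::real poly)" for b by simp
  have nz: "(\<Prod>a\<leftarrow>es. [:- a, 1:]) \<noteq> (0 :: real poly)"
    unfolding prod_list_zero_iff using lin by auto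
  have pz: "[:- a, 1:] * (\<Prod>a\<leftarrow>es. [:- a, 1:]) \<noteq> 0" using nz lin[of a] by (metis mult_eq_0_iff)
  have "Polynomial.order x (\<Prod>a\<leftarrow>a#es. [:- a, 1:]) = Polynomial.order x ([:- a, 1:] * (\<Prod>a\<leftarrow>es. [:- a, 1:]))"
    by (simp only: prod_list.Cons list.map)
  also have "\<dots> = Polynomial.order x [:- a, 1:] + Polynomial.order x (\<Prod>a\<leftarrow>es. [:- a, 1:])"
    by (rule order_mult[OF pz])
  also have "Polynomial.order x [:- a, 1:] = (if a = x then 1 else 0)" by (simp add: order_linear')
  finally show ?case using Cons by simp
qed

lemma prod_list_count:
  "prod_list (map f es) = (\<Prod>x\<in>set es. (f x :: 'a :: comm_monoid_mult) ^ count (mset es) x)"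
proof -
  have "prod_list (map f es) = prod_mset (mset (map f es))" by (simp only: prod_mset_prod_list)
  also have "\<dots> = prod_mset (image_mset f (mset es))" by (simp only: mset_map)
  also have "\<dots> = (\<Prod>x\<in>set_mset (mset es). f x ^ count (mset es) x)"
    by (rule image_prod_mset_multiplicity)
  finally show ?thesis by (simp only: set_mset_mset)
qed

theorem mainTheorem5:
  fixes n :: nat and E :: "nat \<Rightarrow> nat \<Rightarrow> bool"
  assumes "simple_graph n E" and "connected_graph n E" and "n \<ge> 2"
  shows "cheeger n E \<ge> 1 / (2 * (tau n E - 1))"
proof -
  note G = assms(1) and C = assms(2) and n2 = assms(3)
  define K where "K = kirchhoff n E"
  have Kc: "K \<in> carrier_mat n n" unfolding K_def by (rule kirchhoff_carrier)
  have KT: "transpose_mat K = K" unfolding K_def by (rule kirchhoff_transpose[OF G])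
  obtain U D where U: "U \<in> carrier_mat n n" and D: "D \<in> carrier_mat n n" and Dd: "diagonal_mat D"
    and UTU: "transpose_mat U * U = 1\<^sub>m n" and UUT: "U * transpose_mat U = 1\<^sub>m n"
    and KUD: "K = U * D * transpose_mat U"
    using spectral[OF Kc KT] by (elim exE conjE) (rule that)
  have UT: "transpose_mat U \<in> carrier_mat n n" using U by simp
  define d where "d i = D $$ (i,i)" for i
  define u where "u i = col U i" for i
  have uc: "u i \<in> carrier_vec n" for i unfolding u_def using U by (intro carrier_vecI) simp
  have Doff: "D $$ (i,j) = 0" if "i<n" "j<n" "i \<noteq> j" for i j
    using Dd D that unfolding diagonal_mat_def by auto
  have KU: "K * U = U * D"
  proof -
    have "K * U = (U * D * transpose_mat U) * U" by (simp only: KUD[symmetric])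
    also have "\<dots> = (U * D) * (transpose_mat U * U)"
      by (rule assoc_mult_mat[of _ n n _ n _ n]) (use U D UT in auto)
    also have "\<dots> = U * D" unfolding UTU using U D by (simp add: right_mult_one_mat[of _ n n])
    finally show ?thesis .
  qed
  have Ku: "K *\<^sub>v u i = d i \<cdot>\<^sub>v u i" if i: "i<n" for i
  proof -
    have "K *\<^sub>v u i = col (U * D) i" unfolding u_def KU[symmetric] by (rule col_mult2[OF Kc U i, symmetric])
    also have "\<dots> = d i \<cdot>\<^sub>v u i"
    proof (rule eq_vecI)
      fix k assume "k < dim_vec (d i \<cdot>\<^sub>v u i)"
      hence k: "k < n" using uc[of i] by simp
      have "col (U * D) i $ k = (\<Sum>j\<in>{0..<n}. U $$ (k,j) * D $$ (j,i))"
        using U D i k by (simp add: scalar_prod_def)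
      also have "\<dots> = U $$ (k,i) * D $$ (i,i)"
        using i by (subst sum.remove[of _ i]) (auto simp: Doff intro!: sum.neutral)
      finally show "col (U * D) i $ k = (d i \<cdot>\<^sub>v u i) $ k"
        using U i k by (simp add: u_def d_def)
    qed (use U D i uc[of i] in auto)
    finally show ?thesis .
  qed
  have uu: "u i \<bullet> u i = 1" if i: "i<n" for i
    using arg_cong[OF UTU, of "\<lambda>M. M $$ (i,i)"] U i by (simp add: u_def)
  have quad: "d i = u i \<bullet> (K *\<^sub>v u i)" if i: "i<n" for i
    using Ku[OF i] uu[OF i] uc[of i] by simp
  have dnn: "d i \<ge> 0" if i: "i<n" for i
  proof -
    have "2 * d i = (\<Sum>a<n. \<Sum>b<n. if E a b then (u i$a - u i$b)^2 else 0)"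
      unfolding quad[OF i] K_def by (rule kirchhoff_quad[OF G uc])
    also have "\<dots> \<ge> 0" by (intro sum_nonneg) auto
    finally show ?thesis by simp
  qed
  have dker: "u i $ k = u i $ 0" if i: "i<n" and d0: "d i = 0" and k: "k<n" for i k
    using kernel_const[OF G C uc, of i k] quad[OF i] d0 k unfolding K_def by simp
  define es where "es = diag_mat D"
  have es: "es = map d [0..<n]" unfolding es_def diag_mat_def d_def using D by simp
  have ut: "upper_triangular D" using Doff D unfolding upper_triangular_def by auto
  have sim: "similar_mat K D" unfolding similar_mat_def similar_mat_wit_def
    using U UT D Kc UUT UTU KUD by (intro exI[of _ U] exI[of _ "transpose_mat U"]) (auto simp: Let_def)
  have cp: "char_poly K = (\<Prod>a\<leftarrow>es. [:-a,1:])"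
    unfolding es_def using char_poly_similar[OF sim] char_poly_upper_triangular[OF D ut] by simp
  have ev: "eigenvalue K x \<longleftrightarrow> x \<in> set es" for x
    unfolding eigenvalue_root_char_poly[OF Kc] cp poly_prod_list prod_list_zero_iff by auto
  have eigset: "{x. eigenvalue K x \<and> x \<noteq> 0} = set es - {0}" using ev by auto
  have pdet: "pdet K = (\<Prod>x\<in>set es - {0}. x ^ count (mset es) x)"
    unfolding pdet_def eigset cp order_prod_linear ..
  have det1: "det (1\<^sub>m n + K) = prod_list (map (\<lambda>a. 1 + a) es)"
  proof -
    have "U * (1\<^sub>m n + D) * transpose_mat U = (U + U * D) * transpose_mat U"
      using U D by (simp add: mult_add_distrib_mat[OF U one_carrier_mat D])
    also have "\<dots> = U * transpose_mat U + U * D * transpose_mat U"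
      using U D UT by (simp add: add_mult_distrib_mat[of U n n "U * D" "transpose_mat U" n])
    also have "\<dots> = 1\<^sub>m n + K" unfolding UUT KUD ..
    finally have eq: "1\<^sub>m n + K = U * (1\<^sub>m n + D) * transpose_mat U" by simp
    have ID: "1\<^sub>m n + D \<in> carrier_mat n n" using D by simp
    have "det (1\<^sub>m n + K) = det U * det (1\<^sub>m n + D) * det (transpose_mat U)"
      unfolding eq using U ID UT by (simp add: det_mult[of _ n])
    also have "det U * det (transpose_mat U) = det (U * transpose_mat U)"
      using U UT by (simp add: det_mult[of _ n])
    hence "det U * det (transpose_mat U) = 1" unfolding UUT by simp
    hence "det U * det (1\<^sub>m n + D) * det (transpose_mat U) = det (1\<^sub>m n + D)"
      by (metis mult.commute mult.left_commute mult_1)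
    also have "det (1\<^sub>m n + D) = prod_list (diag_mat (1\<^sub>m n + D))"
      by (rule det_upper_triangular[OF _ ID]) (use ut D in \<open>auto simp: upper_triangular_def\<close>)
    also have "diag_mat (1\<^sub>m n + D) = map (\<lambda>a. 1 + a) es"
      unfolding es_def diag_mat_def using D by auto
    finally show ?thesis by simp
  qed
  have esnn: "x \<ge> 0" if "x \<in> set es" for x using that dnn unfolding es by auto
  define F where "F x = ((1 + x) / x) ^ count (mset es) x" for x :: real
  have tauf: "tau n E = (\<Prod>x\<in>set es - {0}. F x)"
  proof -
    have "det (1\<^sub>m n + K) = (\<Prod>x\<in>set es. (1 + x) ^ count (mset es) x)"
      unfolding det1 by (rule prod_list_count)
    also have "\<dots> = (\<Prod>x\<in>set es - {0}. (1 + x) ^ count (mset es) x)"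
      by (rule prod.mono_neutral_right) auto
    finally have "tau n E = (\<Prod>x\<in>set es - {0}. (1 + x) ^ count (mset es) x) / (\<Prod>x\<in>set es - {0}. x ^ count (mset es) x)"
      unfolding tau_def pdet[unfolded K_def] K_def by simp
    also have "\<dots> = (\<Prod>x\<in>set es - {0}. F x)"
      unfolding F_def by (simp add: prod_dividef power_divide)
    finally show ?thesis .
  qed
  have taub: "tau n E \<ge> 1 + 1 / d j" if j: "j < n" and dj: "d j \<noteq> 0" for j
  proof -
    have mu: "d j \<in> set es - {0}" using j dj unfolding es by auto
    have Fge: "F x \<ge> 1" if "x \<in> set es - {0}" for x
    proof -
      have "x > 0" using esnn that by force
      hence "(1 + x) / x \<ge> 1" by (simp add: field_simps)
      thus ?thesis unfolding F_def by (rule one_le_power)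
    qed
    have "tau n E = F (d j) * (\<Prod>x\<in>set es - {0} - {d j}. F x)"
      unfolding tauf by (rule prod.remove[OF _ mu]) simp
    also have "\<dots> \<ge> F (d j) * 1"
      using Fge mu by (intro mult_left_mono prod_ge_1) (auto intro: order.trans[OF zero_le_one])
    finally have t1: "tau n E \<ge> F (d j)" by simp
    have pos: "d j > 0" using dnn[OF j] dj by simp
    have c1: "count (mset es) (d j) \<ge> 1" using mu by simp
    have b1: "(1 + d j) / d j \<ge> 1" using pos by (simp add: field_simps)
    have "F (d j) \<ge> ((1 + d j) / d j) ^ 1"
      unfolding F_def by (rule power_increasing[OF c1 b1])
    hence "F (d j) \<ge> 1 + 1 / d j" using pos by (simp add: field_simps)
    thus ?thesis using t1 by simp
  qed
  define fam where "fam = {S. S \<subseteq> {0..<n} \<and> 0 < card S \<and> real (card S) \<le> real n / 2}"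
  define ratio where "ratio S = real (card (edge_boundary n E S)) / real (card S)" for S
  have famfin: "finite fam"
    by (rule finite_subset[of _ "Pow {0..<n}"]) (auto simp: fam_def)
  have famne: "{0} \<in> fam" using n2 unfolding fam_def by auto
  have "cheeger n E \<in> ratio ` fam"
    unfolding cheeger_def fam_def[symmetric] ratio_def[abs_def, symmetric]
    using famfin famne by (intro Min_in) auto
  then obtain S where Sf: "S \<in> fam" and hS: "cheeger n E = ratio S" by blast
  have Ssub: "S \<subseteq> {..<n}" and s0: "0 < card S" and sle: "real (card S) \<le> real n / 2"
    using Sf unfolding fam_def by auto
  define s where "s = card S"
  define b where "b = card (edge_boundary n E S)"
  have finS: "finite S" using Ssub finite_subset by blast
  have sn: "s \<le> n" unfolding s_def using card_mono[OF _ Ssub] by simp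
  have split: "(\<Sum>k<n. if k \<in> S then a else c) = real s * a + (real n - real s) * c" for a c :: real
  proof -
    have "(\<Sum>k<n. if k \<in> S then a else c) = (\<Sum>k\<in>{..<n} \<inter> S. a) + (\<Sum>k\<in>{..<n} - S. c)"
      by (simp add: sum.If_cases Diff_eq)
    also have "{..<n} \<inter> S = S" using Ssub by auto
    also have "card ({..<n} - S) = n - s" unfolding s_def using Ssub finS by (simp add: card_Diff_subset)
    hence "(\<Sum>k\<in>{..<n} - S. c) = (real n - real s) * c" using sn by (simp add: of_nat_diff)
    finally show ?thesis unfolding s_def by simp
  qed
  define f where "f = vec n (\<lambda>i. if i \<in> S then real n - real s else - real s)"
  have fc: "f \<in> carrier_vec n" unfolding f_def by simp
  have fi: "f $ i = (if i \<in> S then real n - real s else - real s)" if "i < n" for i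
    unfolding f_def using that by simp
  have fsum: "(\<Sum>k<n. f$k) = 0"
    using split[of "real n - real s" "- real s"] by (simp add: fi algebra_simps)
  have ff: "f \<bullet> f = real s * (real n - real s) * real n"
  proof -
    have "f \<bullet> f = (\<Sum>k<n. if k \<in> S then (real n - real s)^2 else (real s)^2)"
      unfolding scalar_prod_def using fc by (auto simp: atLeast0LessThan fi power2_eq_square intro!: sum.cong)
    also have "\<dots> = real s * (real n - real s) * real n"
      unfolding split by (simp add: power2_eq_square algebra_simps)
    finally show ?thesis .
  qed
  have fKf: "f \<bullet> (K *\<^sub>v f) = (real n)^2 * real b"
  proof -
    have sym: "E i j = E j i" for i j using G unfolding simple_graph_def by blast
    define I where "I i j = (if E i j \<and> i \<in> S \<and> j \<notin> S then 1 else 0 :: real)" for i j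
    have g: "(if E i j then (f$i - f$j)^2 else 0) = (real n)^2 * (I i j + I j i)"
      if "i<n" "j<n" for i j
      using that sym[of i j] by (auto simp: fi I_def power2_eq_square algebra_simps)
    have cnt: "(\<Sum>i<n. \<Sum>j<n. I i j) = real b"
    proof -
      have "(\<Sum>i<n. \<Sum>j<n. I i j) = (\<Sum>p\<in>{..<n}\<times>{..<n}. I (fst p) (snd p))"
        by (simp add: sum.cartesian_product case_prod_beta')
      also have "\<dots> = (\<Sum>p\<in>{..<n}\<times>{..<n} \<inter> {p. E (fst p) (snd p) \<and> fst p \<in> S \<and> snd p \<notin> S}. 1)"
        unfolding I_def by (simp add: sum.If_cases)
      also have "{..<n}\<times>{..<n} \<inter> {p. E (fst p) (snd p) \<and> fst p \<in> S \<and> snd p \<notin> S} = edge_boundary n E S"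
        unfolding edge_boundary_def using Ssub by auto
      finally show ?thesis unfolding b_def by simp
    qed
    have "2 * (f \<bullet> (K *\<^sub>v f)) = (\<Sum>i<n. \<Sum>j<n. if E i j then (f$i - f$j)^2 else 0)"
      unfolding K_def by (rule kirchhoff_quad[OF G fc])
    also have "\<dots> = (\<Sum>i<n. \<Sum>j<n. (real n)^2 * (I i j + I j i))"
      by (intro sum.cong refl) (simp add: g)
    also have "\<dots> = (real n)^2 * ((\<Sum>i<n. \<Sum>j<n. I i j) + (\<Sum>i<n. \<Sum>j<n. I j i))"
      by (simp only: sum_distrib_left[symmetric] sum.distrib distrib_left)
    also have "(\<Sum>i<n. \<Sum>j<n. I j i) = (\<Sum>i<n. \<Sum>j<n. I i j)" by (rule sum.swap)
    finally show ?thesis unfolding cnt by simp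
  qed
  define c where "c = 2 * cheeger n E"
  have fle: "f \<bullet> (K *\<^sub>v f) \<le> c * (f \<bullet> f)"
  proof -
    have sp: "real s > 0" using s0 unfolding s_def by simp
    have "c * (f \<bullet> f) = 2 * real b * (real n - real s) * real n"
      unfolding c_def hS ratio_def ff using sp by (simp add: b_def s_def field_simps)
    moreover have "(real n)^2 * real b \<le> 2 * real b * (real n - real s) * real n"
    proof -
      have "real n \<le> 2 * (real n - real s)" using sle unfolding s_def by simp
      hence "real n * (real n * real b) \<le> 2 * (real n - real s) * (real n * real b)"
        by (intro mult_right_mono) auto
      thus ?thesis by (simp add: power2_eq_square algebra_simps)
    qed
    ultimately show ?thesis unfolding fKf by simp
  qed
  have perp: "u i \<bullet> f = 0" if i: "i<n" and d0: "d i = 0" for i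
  proof -
    have "u i \<bullet> f = (\<Sum>k\<in>{0..<n}. u i $ k * f $ k)" unfolding scalar_prod_def using fc by simp
    also have "\<dots> = (\<Sum>k\<in>{0..<n}. u i $ 0 * f $ k)" 
    proof (intro sum.cong refl)
      fix k assume "k \<in> {0..<n}"
      hence "u i $ k = u i $ 0" using dker[OF i d0, of k] by simp
      thus "u i $ k * f $ k = u i $ 0 * f $ k" by (rule arg_cong)
    qed
    also have "\<dots> = u i $ 0 * (\<Sum>k<n. f $ k)" by (simp add: sum_distrib_left atLeast0LessThan)
    also have "\<dots> = 0" using fsum by simp
    finally show ?thesis .
  qed
  define g where "g = transpose_mat U *\<^sub>v f"
  have gc: "g \<in> carrier_vec n" unfolding g_def using UT fc by simp
  have gi: "g $ i = u i \<bullet> f" if "i<n" for i unfolding g_def u_def using U that by simp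
  have Ug: "U *\<^sub>v g = f"
  proof -
    have "U *\<^sub>v g = (U * transpose_mat U) *\<^sub>v f" unfolding g_def
      by (rule assoc_mult_mat_vec[symmetric]) (use U UT fc in auto)
    thus ?thesis unfolding UUT using fc by simp
  qed
  have gg: "g \<bullet> g = f \<bullet> f"
  proof -
    have "g \<bullet> g = f \<bullet> (U *\<^sub>v g)" unfolding g_def
      by (rule transpose_vec_mult_scalar[OF U]) (use UT fc in auto)
    thus ?thesis unfolding Ug .
  qed
  have gDg: "f \<bullet> (K *\<^sub>v f) = g \<bullet> (D *\<^sub>v g)"
  proof -
    have UD: "U * D \<in> carrier_mat n n" using U D by simp
    have "K *\<^sub>v f = (U * D) *\<^sub>v g" unfolding KUD g_def
      by (rule assoc_mult_mat_vec) (use UD UT fc in auto)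
    also have "\<dots> = U *\<^sub>v (D *\<^sub>v g)"
      by (rule assoc_mult_mat_vec) (use U D gc in auto)
    finally have "K *\<^sub>v f = U *\<^sub>v (D *\<^sub>v g)" .
    hence "f \<bullet> (K *\<^sub>v f) = f \<bullet> (U *\<^sub>v (D *\<^sub>v g))" by simp
    also have "\<dots> = g \<bullet> (D *\<^sub>v g)" unfolding g_def
      by (rule transpose_vec_mult_scalar[OF U, symmetric]) (use UT D fc gc g_def in auto)
    finally show ?thesis .
  qed
  have Dgi: "(D *\<^sub>v g) $ i = d i * g $ i" if i: "i<n" for i
  proof -
    have "(D *\<^sub>v g) $ i = (\<Sum>j\<in>{0..<n}. D $$ (i,j) * g $ j)"
      using D gc i by (simp add: scalar_prod_def)
    also have "\<dots> = D $$ (i,i) * g $ i"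
      using i by (subst sum.remove[of _ i]) (auto simp: Doff intro!: sum.neutral)
    finally show ?thesis unfolding d_def .
  qed
  have ineq: "(\<Sum>i<n. d i * (g$i)^2) \<le> (\<Sum>i<n. c * (g$i)^2)"
  proof -
    have "g \<bullet> (D *\<^sub>v g) = (\<Sum>i\<in>{0..<n}. g$i * (D *\<^sub>v g)$i)"
      unfolding scalar_prod_def using D by simp
    also have "\<dots> = (\<Sum>i<n. d i * (g$i)^2)" unfolding atLeast0LessThan
    proof (intro sum.cong refl)
      fix i assume "i \<in> {..<n}"
      hence i: "i < n" by simp
      show "g$i * (D *\<^sub>v g)$i = d i * (g$i)^2" unfolding Dgi[OF i] by (simp add: power2_eq_square)
    qed
    finally have "(\<Sum>i<n. d i * (g$i)^2) = g \<bullet> (D *\<^sub>v g)" by simp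
    also have "(\<Sum>i<n. c * (g$i)^2) = c * (g \<bullet> g)"
      unfolding scalar_prod_def using gc by (auto simp: atLeast0LessThan sum_distrib_left power2_eq_square intro!: sum.cong)
    ultimately show ?thesis using fle gDg gg by simp
  qed
  have gnz: "\<exists>i<n. g $ i \<noteq> 0"
  proof (rule ccontr)
    assume "\<not> ?thesis"
    hence "g = 0\<^sub>v n" using gc by (auto intro!: eq_vecI)
    hence g0: "g = 0\<^sub>v n" .
    have "S \<noteq> {}" using s0 by auto
    then obtain i0 where i0: "i0 \<in> S" by blast
    have i0n: "i0 < n" using i0 Ssub by auto
    have "real n - real s > 0" using sle s0 unfolding s_def by simp
    hence "f $ i0 \<noteq> 0" using fi[OF i0n] i0 by simp
    moreover have "f $ i0 = row U i0 \<bullet> 0\<^sub>v n" unfolding Ug[symmetric] g0 using U i0n by simp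
    moreover have "row U i0 \<in> carrier_vec n" using U by (intro carrier_vecI) simp
    ultimately show False by simp
  qed
  have "\<exists>j<n. d j \<noteq> 0 \<and> d j \<le> c"
  proof (rule ccontr)
    assume na: "\<not> ?thesis"
    have le: "c * (g$i)^2 \<le> d i * (g$i)^2" if i: "i \<in> {..<n}" for i
    proof (cases "d i = 0")
      case True
      thus ?thesis using gi perp i by simp
    next
      case False
      thus ?thesis using na i by (intro mult_right_mono) auto
    qed
    obtain i where i: "i<n" "g$i \<noteq> 0" using gnz by blast
    have di: "d i \<noteq> 0" using gi perp i by auto
    have st: "c * (g$i)^2 < d i * (g$i)^2" using na i di by auto
    have "(\<Sum>i<n. c * (g$i)^2) < (\<Sum>i<n. d i * (g$i)^2)"
    proof (rule sum_strict_mono_ex1)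
      show "\<forall>x\<in>{..<n}. c * (g$x)^2 \<le> d x * (g$x)^2" using le by blast
      show "\<exists>a\<in>{..<n}. c * (g$a)^2 < d a * (g$a)^2" using st i by blast
    qed simp
    thus False using ineq by simp
  qed
  then obtain j where j: "j<n" "d j \<noteq> 0" "d j \<le> c" by blast
  have pos: "d j > 0" using dnn[OF j(1)] j(2) by simp
  have t: "tau n E - 1 \<ge> 1 / d j" using taub[OF j(1,2)] by simp
  have ip: "1 / d j > 0" using pos by simp
  have tpos: "tau n E - 1 > 0" using t ip by linarith
  have le2: "2 * (1 / d j) \<le> 2 * (tau n E - 1)" using t by simp
  have "1 / (2 * (tau n E - 1)) \<le> 1 / (2 * (1 / d j))"
    by (rule divide_left_mono[OF le2]) (use ip tpos in auto)
  also have "\<dots> = d j / 2" by simp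
  also have "\<dots> \<le> cheeger n E" using j(3) unfolding c_def by simp
  finally show ?thesis .
qed

end
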